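(* For all formulas $\varphi_1,\psi_1,\psi_2$ and every formula with placeholders $\varphi_2$: $\varphi_1\,\mathbf{W}\,\varphi_2[\psi_1\mathbf{U}\psi_2] \equiv (\varphi_1\,\mathbf{U}\,\varphi_2[\psi_1\mathbf{U}\psi_2]) \vee \mathbf{G}\varphi_1$. Moreover, for every formula with placeholders $\varphi_1$ and all formulas $\varphi_2,\psi_1,\psi_2$: $\varphi_1[\psi_1\mathbf{U}\psi_2]\,\mathbf{W}\,\varphi_2 \equiv (\mathbf{GF}\psi_2 \wedge \varphi_1[\psi_1\mathbf{W}\psi_2]\,\mathbf{W}\,\varphi_2) \vee \varphi_1[\psi_1\mathbf{U}\psi_2]\,\mathbf{U}\,(\varphi_2 \vee \mathbf{G}\varphi_1[\mathbf{false}])$.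
   Context: Fix a finite set $Ap$ of atomic propositions. A word is an infinite sequence $w = w[0]w[1]\dots$ of letters of $2^{Ap}$, and $w_i$ denotes the suffix $w[i]w[i+1]\dots$. Formulas are generated by $\varphi ::= \mathbf{true} \mid \mathbf{false} \mid a \mid \neg a \mid \varphi\wedge\varphi \mid \varphi\vee\varphi \mid \mathbf{X}\varphi \mid \varphi\,\mathbf{U}\,\varphi \mid \varphi\,\mathbf{W}\,\varphi \mid \mathbf{GF}\varphi \mid \mathbf{FG}\varphi$ ($a\in Ap$), where $\mathbf{GF}$, $\mathbf{FG}$ are single unary operators. Semantics: $w\models a$ iff $a\in w[0]$, $w\models\neg a$ iff $a\notin w[0]$, Boolean constants and connectives as usual; $w\models\mathbf{X}\varphi$ iff $w_1\models\varphi$; $w\models\varphi\mathbf{U}\psi$ iff $\exists k$: $w_k\models\psi$ and $\forall j<k$: $w_j\models\varphi$; $w\models\varphi\mathbf{W}\psi$ iff ($\forall k$: $w_k\models\varphi$) or $w\models\varphi\mathbf{U}\psi$; $w\models\mathbf{GF}\varphi$ iff $w_k\models\varphi$ for infinitely many $k$; $w\models\mathbf{FG}\varphi$ iff $\exists n\,\forall k\geq n$: $w_k\models\varphi$. $\mathbf{G}\varphi$ abbreviates $\varphi\,\mathbf{W}\,\mathbf{false}$ (so $w\models\mathbf{G}\varphi$ iff $w_k\models\varphi$ for all $k$). $\varphi\equiv\psi$ means both formulas are satisfied by exactly the same words. A formula with placeholders is a formula over $Ap\cup\{\star\}$, where $\star$ is a special fresh atomic proposition, with at least one occurrence of $\star$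 and no occurrence of $\neg\star$; for such $\varphi$ and a formula $\psi$, $\varphi[\psi]$ denotes the result of substituting $\psi$ for every occurrence of $\star$. Substitution binds more strongly than any operator, e.g. $\varphi_1\,\mathbf{W}\,\varphi_2[\psi]$ means $\varphi_1\,\mathbf{W}\,(\varphi_2[\psi])$. *)

theory Defs
  imports Main
begin

text \<open>LTL formulas in negation normal form over atomic propositions of type 'a
  (the finite set Ap is modelled by a finite type 'a).\<close>
datatype 'a ltl =
    LTrue
  | LFalse
  | Prop 'a
  | NProp 'a
  | And "'a ltl" "'a ltl"
  | Or "'a ltl" "'a ltl"
  | Next "'a ltl"
  | Until "'a ltl" "'a ltl"
  | WUntil "'a ltl" "'a ltl"
  | GF "'a ltl"
  | FG "'a ltl"

type_synonym 'a word = "nat \<Rightarrow> 'a set"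

definition suffix :: "nat \<Rightarrow> 'a word \<Rightarrow> 'a word" where
  "suffix i w = (\<lambda>j. w (i + j))"

fun sem :: "'a word \<Rightarrow> 'a ltl \<Rightarrow> bool" where
  "sem w LTrue = True"
| "sem w LFalse = False"
| "sem w (Prop a) = (a \<in> w 0)"
| "sem w (NProp a) = (a \<notin> w 0)"
| "sem w (And \<phi> \<psi>) = (sem w \<phi> \<and> sem w \<psi>)"
| "sem w (Or \<phi> \<psi>) = (sem w \<phi> \<or> sem w \<psi>)"
| "sem w (Next \<phi>) = sem (suffix 1 w) \<phi>"
| "sem w (Until \<phi> \<psi>) = (\<exists>k. sem (suffix k w) \<psi> \<and> (\<forall>j<k. sem (suffix j w) \<phi>))"
| "sem w (WUntil \<phi> \<psi>) = ((\<forall>k. sem (suffix k w) \<phi>) \<or>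
      (\<exists>k. sem (suffix k w) \<psi> \<and> (\<forall>j<k. sem (suffix j w) \<phi>)))"
| "sem w (GF \<phi>) = infinite {k. sem (suffix k w) \<phi>}"
| "sem w (FG \<phi>) = (\<exists>n. \<forall>k\<ge>n. sem (suffix k w) \<phi>)"

definition G :: "'a ltl \<Rightarrow> 'a ltl" where
  "G \<phi> = WUntil \<phi> LFalse"

definition ltl_equiv :: "'a ltl \<Rightarrow> 'a ltl \<Rightarrow> bool" where
  "ltl_equiv \<phi> \<psi> \<longleftrightarrow> (\<forall>w. sem w \<phi> = sem w \<psi>)"

text \<open>Formulas with placeholders: formulas over Ap \<union> {star}, modelled as 'a option,
  with None playing the role of the fresh proposition star.\<close>
fun star_occurs :: "'a option ltl \<Rightarrow> bool" where
  "star_occurs (Prop None) = True"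
| "star_occurs (And \<phi> \<psi>) = (star_occurs \<phi> \<or> star_occurs \<psi>)"
| "star_occurs (Or \<phi> \<psi>) = (star_occurs \<phi> \<or> star_occurs \<psi>)"
| "star_occurs (Next \<phi>) = star_occurs \<phi>"
| "star_occurs (Until \<phi> \<psi>) = (star_occurs \<phi> \<or> star_occurs \<psi>)"
| "star_occurs (WUntil \<phi> \<psi>) = (star_occurs \<phi> \<or> star_occurs \<psi>)"
| "star_occurs (GF \<phi>) = star_occurs \<phi>"
| "star_occurs (FG \<phi>) = star_occurs \<phi>"
| "star_occurs _ = False"

fun neg_star_occurs :: "'a option ltl \<Rightarrow> bool" where
  "neg_star_occurs (NProp None) = True"
| "neg_star_occurs (And \<phi> \<psi>) = (neg_star_occurs \<phi> \<or> neg_star_occurs \<psi>)"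
| "neg_star_occurs (Or \<phi> \<psi>) = (neg_star_occurs \<phi> \<or> neg_star_occurs \<psi>)"
| "neg_star_occurs (Next \<phi>) = neg_star_occurs \<phi>"
| "neg_star_occurs (Until \<phi> \<psi>) = (neg_star_occurs \<phi> \<or> neg_star_occurs \<psi>)"
| "neg_star_occurs (WUntil \<phi> \<psi>) = (neg_star_occurs \<phi> \<or> neg_star_occurs \<psi>)"
| "neg_star_occurs (GF \<phi>) = neg_star_occurs \<phi>"
| "neg_star_occurs (FG \<phi>) = neg_star_occurs \<phi>"
| "neg_star_occurs _ = False"

definition placeholder_formula :: "'a option ltl \<Rightarrow> bool" where
  "placeholder_formula \<phi> \<longleftrightarrow> star_occurs \<phi> \<and> \<not> neg_star_occurs \<phi>"

text \<open>Substitution phi[psi] of psi for every occurrence of star.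
  (The NProp None case never arises for placeholder formulas.)\<close>
fun subst :: "'a option ltl \<Rightarrow> 'a ltl \<Rightarrow> 'a ltl" where
  "subst LTrue \<psi> = LTrue"
| "subst LFalse \<psi> = LFalse"
| "subst (Prop None) \<psi> = \<psi>"
| "subst (Prop (Some a)) \<psi> = Prop a"
| "subst (NProp None) \<psi> = LFalse"
| "subst (NProp (Some a)) \<psi> = NProp a"
| "subst (And \<phi>1 \<phi>2) \<psi> = And (subst \<phi>1 \<psi>) (subst \<phi>2 \<psi>)"
| "subst (Or \<phi>1 \<phi>2) \<psi> = Or (subst \<phi>1 \<psi>) (subst \<phi>2 \<psi>)"
| "subst (Next \<phi>) \<psi> = Next (subst \<phi> \<psi>)"
| "subst (Until \<phi>1 \<phi>2) \<psi> = Until (subst \<phi>1 \<psi>) (subst \<phi>2 \<psi>)"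
| "subst (WUntil \<phi>1 \<phi>2) \<psi> = WUntil (subst \<phi>1 \<psi>) (subst \<phi>2 \<psi>)"
| "subst (GF \<phi>) \<psi> = GF (subst \<phi> \<psi>)"
| "subst (FG \<phi>) \<psi> = FG (subst \<phi> \<psi>)"

end

theory Submission
  imports Defs
begin

lemma suffix_suffix[simp]: "suffix i (suffix j w) = suffix (j + i) w"
  by (simp add: suffix_def add.assoc)

lemma suffix_0[simp]: "suffix 0 w = w"
  by (simp add: suffix_def)

lemma subst_mono:
  assumes "\<not> neg_star_occurs \<phi>" "\<forall>i. sem (suffix i w) a \<longrightarrow> sem (suffix i w) b"
    "sem w (subst \<phi> a)"
  shows "sem w (subst \<phi> b)"
  using assms
proof (induction \<phi> arbitrary: w)
  case (Prop x) then show ?case by (cases x) (auto dest: spec[of _ 0])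
next
  case (NProp x) then show ?case by (cases x) auto
next
  case (Next \<phi>) then show ?case by auto
next
  case (Until \<phi>1 \<phi>2) then show ?case by (simp, (metis suffix_suffix)?)
next
  case (WUntil \<phi>1 \<phi>2) then show ?case by (simp, (metis suffix_suffix)?)
next
  case (GF \<phi>)
  have "{k. sem (suffix k w) (subst \<phi> a)} \<subseteq> {k. sem (suffix k w) (subst \<phi> b)}"
    using GF by (auto, (metis suffix_suffix)?)
  then show ?case using GF by (simp, metis finite_subset)
next
  case (FG \<phi>) then show ?case by (simp, (metis suffix_suffix)?)
qed auto

lemma subst_cong:
  assumes "\<forall>i. sem (suffix i w) a = sem (suffix i w) b"
  shows "sem w (subst \<phi> a) = sem w (subst \<phi> b)"
  using assms
proof (induction \<phi> arbitrary: w)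
  case (Prop x) then show ?case by (cases x) (auto dest: spec[of _ 0])
next
  case (NProp x) then show ?case by (cases x) auto
next
  case (Next \<phi>) then show ?case by auto
next
  case (Until \<phi>1 \<phi>2)
  then have "\<And>k. sem (suffix k w) (subst \<phi>1 a) = sem (suffix k w) (subst \<phi>1 b)"
     "\<And>k. sem (suffix k w) (subst \<phi>2 a) = sem (suffix k w) (subst \<phi>2 b)" by auto
  then show ?case by simp
next
  case (WUntil \<phi>1 \<phi>2)
  then have "\<And>k. sem (suffix k w) (subst \<phi>1 a) = sem (suffix k w) (subst \<phi>1 b)"
     "\<And>k. sem (suffix k w) (subst \<phi>2 a) = sem (suffix k w) (subst \<phi>2 b)" by auto
  then show ?case by simp
next
  case (GF \<phi>)
  then have "\<And>k. sem (suffix k w) (subst \<phi> a) = sem (suffix k w) (subst \<phi> b)" by auto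
  then show ?case by simp
next
  case (FG \<phi>)
  then have "\<And>k. sem (suffix k w) (subst \<phi> a) = sem (suffix k w) (subst \<phi> b)" by auto
  then show ?case by simp
qed auto

lemma GF_UW:
  assumes "sem w (GF \<psi>2)"
  shows "\<forall>i. sem (suffix i w) (Until \<psi>1 \<psi>2) = sem (suffix i w) (WUntil \<psi>1 \<psi>2)"
proof
  fix i
  obtain k where k: "k \<ge> i" "sem (suffix k w) \<psi>2"
    using assms finite_nat_set_iff_bounded_le[of "{k. sem (suffix k w) \<psi>2}"]
    by simp (metis mem_Collect_eq nle_le)
  have "sem (suffix i w) (Until \<psi>1 \<psi>2)" if "\<forall>k. sem (suffix k (suffix i w)) \<psi>1"
    using that k by (auto intro!: exI[of _ "k - i"])
  then show "sem (suffix i w) (Until \<psi>1 \<psi>2) = sem (suffix i w) (WUntil \<psi>1 \<psi>2)"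
    by auto
qed

lemma not_GF_U:
  assumes "\<not> sem w (GF \<psi>2)"
  shows "\<exists>n. \<forall>i. \<not> sem (suffix i (suffix n w)) (Until \<psi>1 \<psi>2)"
proof -
  have "finite {k. sem (suffix k w) \<psi>2}" using assms by simp
  then obtain m where "\<forall>k\<in>{k. sem (suffix k w) \<psi>2}. k \<le> m"
    using finite_nat_set_iff_bounded_le by blast
  then have "\<forall>k\<ge>Suc m. \<not> sem (suffix k w) \<psi>2" by fastforce
  then obtain n where "\<forall>k\<ge>n. \<not> sem (suffix k w) \<psi>2" by blast
  then show ?thesis by (auto intro!: exI[of _ n])
qed

theorem lemma1:
  shows "(\<forall>(\<phi>1 :: 'a::finite ltl) (\<phi>2 :: 'a option ltl) \<psi>1 \<psi>2.
            placeholder_formula \<phi>2 \<longrightarrow>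
            ltl_equiv (WUntil \<phi>1 (subst \<phi>2 (Until \<psi>1 \<psi>2)))
                      (Or (Until \<phi>1 (subst \<phi>2 (Until \<psi>1 \<psi>2))) (G \<phi>1)))
       \<and> (\<forall>(\<phi>1 :: 'a option ltl) (\<phi>2 :: 'a ltl) \<psi>1 \<psi>2.
            placeholder_formula \<phi>1 \<longrightarrow>
            ltl_equiv (WUntil (subst \<phi>1 (Until \<psi>1 \<psi>2)) \<phi>2)
                      (Or (And (GF \<psi>2) (WUntil (subst \<phi>1 (WUntil \<psi>1 \<psi>2)) \<phi>2))
                          (Until (subst \<phi>1 (Until \<psi>1 \<psi>2))
                                 (Or \<phi>2 (G (subst \<phi>1 LFalse))))))"
proof (intro conjI allI impI)
  fix \<phi>1 :: "'a ltl" and \<phi>2 :: "'a option ltl" and \<psi>1 \<psi>2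
  show "ltl_equiv (WUntil \<phi>1 (subst \<phi>2 (Until \<psi>1 \<psi>2)))
                      (Or (Until \<phi>1 (subst \<phi>2 (Until \<psi>1 \<psi>2))) (G \<phi>1))"
    unfolding ltl_equiv_def G_def by auto
next
  fix \<phi>1 :: "'a option ltl" and \<phi>2 :: "'a ltl" and \<psi>1 \<psi>2
  assume "placeholder_formula \<phi>1"
  then have nn: "\<not> neg_star_occurs \<phi>1" by (simp add: placeholder_formula_def)
  let ?U = "Until \<psi>1 \<psi>2 :: 'a ltl" and ?W = "WUntil \<psi>1 \<psi>2 :: 'a ltl"
  show "ltl_equiv (WUntil (subst \<phi>1 ?U) \<phi>2)
                      (Or (And (GF \<psi>2) (WUntil (subst \<phi>1 ?W) \<phi>2))
                          (Until (subst \<phi>1 ?U) (Or \<phi>2 (G (subst \<phi>1 LFalse)))))"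
    unfolding ltl_equiv_def
  proof (intro allI iffI)
    fix w :: "'a word"
    assume L: "sem w (WUntil (subst \<phi>1 ?U) \<phi>2)"
    show "sem w (Or (And (GF \<psi>2) (WUntil (subst \<phi>1 ?W) \<phi>2))
                          (Until (subst \<phi>1 ?U) (Or \<phi>2 (G (subst \<phi>1 LFalse)))))"
    proof (cases "\<forall>k. sem (suffix k w) (subst \<phi>1 ?U)")
      case True
      show ?thesis
      proof (cases "sem w (GF \<psi>2)")
        case g: True
        have "\<forall>k. sem (suffix k w) (subst \<phi>1 ?W)"
        proof
          fix k
          have "\<forall>i. sem (suffix i (suffix k w)) ?U = sem (suffix i (suffix k w)) ?W"
            using GF_UW[OF g] by simp
          then show "sem (suffix k w) (subst \<phi>1 ?W)"
            using subst_cong True by blast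
        qed
        then show ?thesis using g by simp
      next
        case g: False
        obtain n where n: "\<forall>i. \<not> sem (suffix i (suffix n w)) ?U"
          using not_GF_U[OF g] by blast
        have "\<forall>k. sem (suffix k (suffix n w)) (subst \<phi>1 LFalse)"
        proof
          fix k
          have "\<forall>i. sem (suffix i (suffix k (suffix n w))) ?U
                   = sem (suffix i (suffix k (suffix n w))) LFalse"
            using n by (metis sem.simps(2) suffix_suffix)
          then show "sem (suffix k (suffix n w)) (subst \<phi>1 LFalse)"
            using subst_cong True by (metis suffix_suffix)
        qed
        then have "sem (suffix n w) (Or \<phi>2 (G (subst \<phi>1 LFalse)))"
          by (simp add: G_def)
        then show ?thesis using True
          by (simp only: sem.simps) blast
      qed
    next
      case False
      then obtain k where "sem (suffix k w) \<phi>2" "\<forall>j<k. sem (suffix j w) (subst \<phi>1 ?U)"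
        using L by auto
      then show ?thesis by auto
    qed
  next
    fix w :: "'a word"
    assume R: "sem w (Or (And (GF \<psi>2) (WUntil (subst \<phi>1 ?W) \<phi>2))
                          (Until (subst \<phi>1 ?U) (Or \<phi>2 (G (subst \<phi>1 LFalse)))))"
    show "sem w (WUntil (subst \<phi>1 ?U) \<phi>2)"
    proof (cases "sem w (GF \<psi>2)")
      case g: True
      have eq: "\<And>k. sem (suffix k w) (subst \<phi>1 ?W) = sem (suffix k w) (subst \<phi>1 ?U)"
      proof -
        fix k
        have "\<forall>i. sem (suffix i (suffix k w)) ?W = sem (suffix i (suffix k w)) ?U"
          using GF_UW[OF g] by simp
        then show "sem (suffix k w) (subst \<phi>1 ?W) = sem (suffix k w) (subst \<phi>1 ?U)"
          using subst_cong by blast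
      qed
      show ?thesis
      proof (cases "sem w (And (GF \<psi>2) (WUntil (subst \<phi>1 ?W) \<phi>2))")
        case True
        then show ?thesis using eq by simp
      next
        case False
        then have R2: "sem w (Until (subst \<phi>1 ?U) (Or \<phi>2 (G (subst \<phi>1 LFalse))))" using R False by (simp only: sem.simps(6)) blast
        show ?thesis
        proof -
          obtain k where k: "sem (suffix k w) (Or \<phi>2 (G (subst \<phi>1 LFalse)))"
            "\<forall>j<k. sem (suffix j w) (subst \<phi>1 ?U)" using R2 by auto
          show ?thesis
          proof (cases "sem (suffix k w) \<phi>2")
            case True then show ?thesis using k by auto
          next
            case False
            then have G: "\<forall>i. sem (suffix i (suffix k w)) (subst \<phi>1 LFalse)" using k by (simp add: G_def)
            have "\<forall>j. sem (suffix j w) (subst \<phi>1 ?U)"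
            proof
              fix j
              show "sem (suffix j w) (subst \<phi>1 ?U)"
              proof (cases "j < k")
                case True then show ?thesis using k by auto
              next
                case False
                then have "sem (suffix (j - k) (suffix k w)) (subst \<phi>1 LFalse)" using G by blast
                then have "sem (suffix j w) (subst \<phi>1 LFalse)" using False by simp
                then show ?thesis using subst_mono[OF nn] by (metis sem.simps(2))
              qed
            qed
            then show ?thesis by simp
          qed
        qed
      qed
    next
      case g: False
      then have R2: "sem w (Until (subst \<phi>1 ?U) (Or \<phi>2 (G (subst \<phi>1 LFalse))))" using R by simp
      obtain k where k: "sem (suffix k w) (Or \<phi>2 (G (subst \<phi>1 LFalse)))"
        "\<forall>j<k. sem (suffix j w) (subst \<phi>1 ?U)" using R2 by auto
      show ?thesis
      proof (cases "sem (suffix k w) \<phi>2")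
        case True then show ?thesis using k by auto
      next
        case False
        then have G: "\<forall>i. sem (suffix i (suffix k w)) (subst \<phi>1 LFalse)" using k by (simp add: G_def)
        have "\<forall>j. sem (suffix j w) (subst \<phi>1 ?U)"
        proof
          fix j
          show "sem (suffix j w) (subst \<phi>1 ?U)"
          proof (cases "j < k")
            case True then show ?thesis using k by auto
          next
            case False
            then have "sem (suffix (j - k) (suffix k w)) (subst \<phi>1 LFalse)" using G by blast
            then have "sem (suffix j w) (subst \<phi>1 LFalse)" using False by simp
            then show ?thesis using subst_mono[OF nn] by (metis sem.simps(2))
          qed
        qed
        then show ?thesis by simp
      qed
    qed
  qed
qed

end
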